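(* Let $A$ be a set with $n$ elements. Every d-path $\alpha\in\vec P(Y^A)_{\mathbf0}^{\mathbf1}$ has the form $\alpha(t)=[c;\beta(t)]$ for all $t\in[0,1]$, for some $n$-cube $c\in Y^A[n]$ and some continuous path $\beta:[0,1]\to[0,1]^n$ with non-decreasing coordinates, $\beta(0)=(0,\dots,0)$, $\beta(1)=(1,\dots,1)$.
   Context: A precubical set ($\square$-set) $K$ is a sequence of pairwise disjoint sets $(K[n])_{n\ge0}$ with face maps $d^\varepsilon_i:K[n]\to K[n-1]$ ($1\le i\le n$, $\varepsilon\in\{0,1\}$) satisfying $d^\varepsilon_i d^\eta_j=d^\eta_{j-1}d^\varepsilon_i$ for $i<j$; bi-pointed $\square$-sets have chosen vertices $\mathbf0,\mathbf1\in K[0]$. Geometric realization: $|K|=\coprod_n K[n]\times[0,1]^n/\sim$ with $(d^\varepsilon_i c,\mathbf x)\sim(c,\delta^\varepsilon_i\mathbf x)$, where $\delta^\varepsilon_i(x_1,\dots,x_{n-1})=(x_1,\dots,x_{i-1},\varepsilon,x_i,\dots,x_{n-1})$; $[c;\mathbf x]$ is the class. A path $\alpha:[0,1]\to|K|$ is a d-path if there are $0=t_0<\dots<t_m=1$, $c_k\in K[n_k]$ and continuous $\beta_k:[t_{k-1},t_k]\to[0,1]^{n_k}$ with non-decreasing coordinates such that $\alpha(t)=[c_k;\beta_k(t)]$ on $[t_{k-1},t_k]$. $\vec P(K)_{\mathbf0}^{\mathbf1}$ is the space of d-paths from $\mathbf0$ to $\mathbf1$. $Y^A$ is the bi-pointed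 $\square$-set where $Y^A[k]$ is the set of pairs $(c,<)$ with $c:A\to\{0,*,1\}$, $|c^{-1}( * )|=k$, and $<$ a strict total order on $c^{-1}( * )$; if $c^{-1}( * )=\{a_1<\dots<a_k\}$ then $d^\varepsilon_i(c,<)=(c',<')$ where $c'(a_i)=\varepsilon$, $c'=c$ elsewhere, and $<'$ is the restriction of $<$ to $c^{-1}( * )\setminus\{a_i\}$; $\mathbf0=(\text{const}_0,\emptyset)$, $\mathbf1=(\text{const}_1,\emptyset)$. *)

theory Defs
  imports "HOL-Analysis.Analysis" "HOL-Library.FuncSet"
begin

text \<open>Points of the n-cube [0,1]^n are represented as functions nat => real whose
  coordinates 0..n-1 are the n coordinates (coordinate x_k of the paper is x (k-1))
  and which vanish from coordinate n on (normal form).  The space nat => real carries the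
  product topology of HOL-Analysis, which agrees with the Euclidean topology on cube n.\<close>

definition cube :: "nat \<Rightarrow> (nat \<Rightarrow> real) set" where
  "cube n = {x. (\<forall>j<n. 0 \<le> x j \<and> x j \<le> 1) \<and> (\<forall>j\<ge>n. x j = 0)}"

definition bval :: "bool \<Rightarrow> real" where
  "bval e = (if e then 1 else 0)"

text \<open>delta i e (x_1,...,x_{n-1}) = (x_1,...,x_{i-1},e,x_i,...,x_{n-1}), for 1 <= i <= n.\<close>
definition delta :: "nat \<Rightarrow> bool \<Rightarrow> (nat \<Rightarrow> real) \<Rightarrow> (nat \<Rightarrow> real)" where
  "delta i e x = (\<lambda>j. if j < i - 1 then x j else if j = i - 1 then bval e else x (j - 1))"

text \<open>A precubical set is given by its set of cells K, a dimension function dm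
  (c \<in> K[dm c]) and face maps face i e c = d^e_i c (defined for 1 <= i <= dm c).
  The realization |K| is the quotient of the disjoint union of cubes by the equivalence
  relation generated by (d^e_i c, x) ~ (c, delta^e_i x); a point of |K| is an equivalence
  class.\<close>

definition real_gen ::
  "'c set \<Rightarrow> ('c \<Rightarrow> nat) \<Rightarrow> (nat \<Rightarrow> bool \<Rightarrow> 'c \<Rightarrow> 'c)
    \<Rightarrow> ('c \<times> (nat \<Rightarrow> real)) \<Rightarrow> ('c \<times> (nat \<Rightarrow> real)) \<Rightarrow> bool" where
  "real_gen K dm face p q \<longleftrightarrow>
     (\<exists>c i e x. c \<in> K \<and> 1 \<le> i \<and> i \<le> dm c \<and> x \<in> cube (dm c - 1) \<and>
        p = (face i e c, x) \<and> q = (c, delta i e x))"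

definition rclass ::
  "'c set \<Rightarrow> ('c \<Rightarrow> nat) \<Rightarrow> (nat \<Rightarrow> bool \<Rightarrow> 'c \<Rightarrow> 'c)
    \<Rightarrow> 'c \<Rightarrow> (nat \<Rightarrow> real) \<Rightarrow> ('c \<times> (nat \<Rightarrow> real)) set" where
  "rclass K dm face c x = {q. equivclp (real_gen K dm face) (c, x) q}"

definition mono_coords :: "real set \<Rightarrow> (real \<Rightarrow> nat \<Rightarrow> real) \<Rightarrow> bool" where
  "mono_coords I \<beta> \<longleftrightarrow> (\<forall>s\<in>I. \<forall>t\<in>I. s \<le> t \<longrightarrow> (\<forall>j. \<beta> s j \<le> \<beta> t j))"

text \<open>d-paths in |K| (parametrised by [0,1]).  Continuity of alpha is a consequence of
  the piecewise description (pasting lemma), so it is not stated separately.\<close>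
definition dpath ::
  "'c set \<Rightarrow> ('c \<Rightarrow> nat) \<Rightarrow> (nat \<Rightarrow> bool \<Rightarrow> 'c \<Rightarrow> 'c)
    \<Rightarrow> (real \<Rightarrow> ('c \<times> (nat \<Rightarrow> real)) set) \<Rightarrow> bool" where
  "dpath K dm face \<alpha> \<longleftrightarrow>
     (\<exists>m::nat. \<exists>ts::nat \<Rightarrow> real. \<exists>cs::nat \<Rightarrow> 'c. \<exists>\<beta>s::nat \<Rightarrow> real \<Rightarrow> nat \<Rightarrow> real.
        1 \<le> m \<and> ts 0 = 0 \<and> ts m = 1 \<and> (\<forall>k<m. ts k < ts (Suc k)) \<and>
        (\<forall>k\<in>{1..m}.
            cs k \<in> K \<and>
            continuous_on {ts (k - 1)..ts k} (\<beta>s k) \<and>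
            (\<forall>t\<in>{ts (k - 1)..ts k}. \<beta>s k t \<in> cube (dm (cs k))) \<and>
            mono_coords {ts (k - 1)..ts k} (\<beta>s k) \<and>
            (\<forall>t\<in>{ts (k - 1)..ts k}. \<alpha> t = rclass K dm face (cs k) (\<beta>s k t))))"

datatype tri = T0 | Star | T1

text \<open>A cell of Y^A is a pair (c, <) with c : A -> {0,*,1} (an extensional function,
  undefined outside A) and < a strict total order on c^{-1}(*), given as a relation.\<close>
type_synonym 'a ycell = "('a \<Rightarrow> tri) \<times> ('a \<times> 'a) set"

definition stars :: "'a set \<Rightarrow> ('a \<Rightarrow> tri) \<Rightarrow> 'a set" where
  "stars A c = {a \<in> A. c a = Star}"

definition Ycells :: "'a set \<Rightarrow> 'a ycell set" where
  "Ycells A = {(c, lt). c \<in> A \<rightarrow>\<^sub>E UNIV \<and> lt \<subseteq> stars A c \<times> stars A c \<and>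
                         strict_linear_order_on (stars A c) lt}"

definition Ydim :: "'a set \<Rightarrow> 'a ycell \<Rightarrow> nat" where
  "Ydim A cl = card (stars A (fst cl))"

text \<open>The i-th element a_i (1-based) of c^{-1}(*) w.r.t. <.\<close>
definition ith_star :: "'a set \<Rightarrow> 'a ycell \<Rightarrow> nat \<Rightarrow> 'a" where
  "ith_star A cl i = (THE a. a \<in> stars A (fst cl) \<and>
                         card {b. (b, a) \<in> snd cl} = i - 1)"

definition tval :: "bool \<Rightarrow> tri" where
  "tval e = (if e then T1 else T0)"

definition Yface :: "'a set \<Rightarrow> nat \<Rightarrow> bool \<Rightarrow> 'a ycell \<Rightarrow> 'a ycell" where
  "Yface A i e cl =
     (let a = ith_star A cl i;
          c' = (fst cl)(a := tval e);
          S' = stars A (fst cl) - {a}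
      in (c', snd cl \<inter> (S' \<times> S')))"

definition Yzero :: "'a set \<Rightarrow> 'a ycell" where
  "Yzero A = (\<lambda>a\<in>A. T0, {})"

definition Yone :: "'a set \<Rightarrow> 'a ycell" where
  "Yone A = (\<lambda>a\<in>A. T1, {})"

definition zero_vec :: "nat \<Rightarrow> real" where "zero_vec = (\<lambda>j. 0)"

definition one_vec :: "nat \<Rightarrow> nat \<Rightarrow> real" where
  "one_vec n = (\<lambda>j. if j < n then 1 else 0)"

end

theory Submission
  imports Defs
begin

definition slo :: "'a set \<Rightarrow> ('a \<times> 'a) set \<Rightarrow> bool" where
  "slo S r \<longleftrightarrow> r \<subseteq> S \<times> S \<and> trans r \<and> irrefl r \<and> total_on S r"

lemma slo_iff: "slo S r \<longleftrightarrow> r \<subseteq> S \<times> S \<and> strict_linear_order_on S r"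
  by (simp add: slo_def strict_linear_order_on_def)

definition pos :: "('a \<times> 'a) set \<Rightarrow> 'a \<Rightarrow> nat" where
  "pos r a = card {b. (b, a) \<in> r}"

lemma pos_mono:
  assumes "finite S" "slo S r" "(a, b) \<in> r"
  shows "pos r a < pos r b"
proof -
  have sub: "{c. (c, a) \<in> r} \<subset> {c. (c, b) \<in> r}"
    using assms(2,3) unfolding slo_def trans_def irrefl_on_def by blast
  have "{c. (c, b) \<in> r} \<subseteq> S" using assms(2) unfolding slo_def by blast
  then have "finite {c. (c, b) \<in> r}" using assms(1) by (rule finite_subset)
  then show ?thesis unfolding pos_def using sub psubset_card_mono by blast
qed

lemma pos_less_iff:
  assumes "finite S" "slo S r" "a \<in> S" "b \<in> S"
  shows "pos r a < pos r b \<longleftrightarrow> (a, b) \<in> r"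
proof
  assume h: "pos r a < pos r b"
  show "(a, b) \<in> r"
  proof (rule ccontr)
    assume "(a, b) \<notin> r"
    moreover have "a \<noteq> b" using h by auto
    ultimately have "(b, a) \<in> r" using assms unfolding slo_def total_on_def by blast
    then show False using pos_mono[OF assms(1,2)] h by fastforce
  qed
next
  assume "(a, b) \<in> r" then show "pos r a < pos r b" by (rule pos_mono[OF assms(1,2)])
qed

lemma pos_inj:
  assumes "finite S" "slo S r"
  shows "inj_on (pos r) S"
proof (rule inj_onI)
  fix a b assume "a \<in> S" "b \<in> S" "pos r a = pos r b"
  show "a = b"
  proof (rule ccontr)
    assume "a \<noteq> b"
    then have "(a, b) \<in> r \<or> (b, a) \<in> r" using assms(2) \<open>a \<in> S\<close> \<open>b \<in> S\<close>
      unfolding slo_def total_on_def by blast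
    then show False using pos_mono[OF assms] \<open>pos r a = pos r b\<close> by fastforce
  qed
qed

lemma pos_bound:
  assumes "finite S" "slo S r" "a \<in> S"
  shows "pos r a < card S"
proof -
  have sub: "{c. (c, a) \<in> r} \<subseteq> S - {a}"
    using assms(2) unfolding slo_def irrefl_on_def by blast
  have "pos r a \<le> card (S - {a})" unfolding pos_def
    using card_mono[OF finite_Diff[OF assms(1)] sub] .
  moreover have "card (S - {a}) < card S" using card_Diff1_less[OF assms(1,3)] .
  ultimately show ?thesis by linarith
qed

lemma pos_bij:
  assumes "finite S" "slo S r"
  shows "bij_betw (pos r) S {..<card S}"
proof -
  have "pos r ` S \<subseteq> {..<card S}" using pos_bound[OF assms] by auto
  moreover have "card (pos r ` S) = card {..<card S}" using card_image[OF pos_inj[OF assms]] by simp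
  ultimately have "pos r ` S = {..<card S}"
    by (intro card_subset_eq) auto
  then show ?thesis using pos_inj[OF assms] by (simp add: bij_betw_def)
qed

lemma pos_surj:
  assumes "finite S" "slo S r" "j < card S"
  shows "\<exists>!a. a \<in> S \<and> pos r a = j"
proof -
  have "j \<in> pos r ` S" using pos_bij[OF assms(1,2)] assms(3) unfolding bij_betw_def by auto
  then obtain a where "a \<in> S" "pos r a = j" by blast
  moreover have "\<And>b. b \<in> S \<Longrightarrow> pos r b = j \<Longrightarrow> b = a"
    using pos_inj[OF assms(1,2)] \<open>a \<in> S\<close> \<open>pos r a = j\<close> unfolding inj_on_def by metis
  ultimately show ?thesis by blast
qed

lemma Ycells_iff:
  "cl \<in> Ycells A \<longleftrightarrow> fst cl \<in> A \<rightarrow>\<^sub>E UNIV \<and> slo (stars A (fst cl)) (snd cl)"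
  by (cases cl) (auto simp: Ycells_def slo_iff)

lemma stars_finite: "finite A \<Longrightarrow> finite (stars A c)"
  unfolding stars_def by simp

lemma ith_star:
  assumes "finite A" "cl \<in> Ycells A" "1 \<le> i" "i \<le> Ydim A cl"
  shows "ith_star A cl i \<in> stars A (fst cl) \<and> pos (snd cl) (ith_star A cl i) = i - 1"
proof -
  have slo: "slo (stars A (fst cl)) (snd cl)" using assms(2) Ycells_iff by blast
  have "\<exists>!a. a \<in> stars A (fst cl) \<and> pos (snd cl) a = i - 1"
    using pos_surj[OF stars_finite[OF assms(1)] slo] assms(3,4) unfolding Ydim_def by simp
  then show ?thesis unfolding ith_star_def pos_def[symmetric]
    by (rule theI')
qed

definition pval :: "'a ycell \<Rightarrow> (nat \<Rightarrow> real) \<Rightarrow> 'a \<Rightarrow> real" where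
  "pval cl x a = (if fst cl a = Star then x (pos (snd cl) a) else if fst cl a = T1 then 1 else 0)"

definition intr :: "'a set \<Rightarrow> 'a ycell \<Rightarrow> (nat \<Rightarrow> real) \<Rightarrow> 'a set" where
  "intr A cl x = {a \<in> stars A (fst cl). 0 < x (pos (snd cl) a) \<and> x (pos (snd cl) a) < 1}"

definition pinv :: "'a set \<Rightarrow> 'a ycell \<Rightarrow> (nat \<Rightarrow> real) \<Rightarrow> ('a \<Rightarrow> real) \<times> ('a \<times> 'a) set" where
  "pinv A cl x = (restrict (pval cl x) A, snd cl \<inter> (intr A cl x \<times> intr A cl x))"

lemma intr_eq: "intr A cl x = {a \<in> A. 0 < pval cl x a \<and> pval cl x a < 1}"
  unfolding intr_def pval_def stars_def by auto

lemma face_pos: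
  assumes "finite S" "slo S r" "a \<in> S" "b \<in> S" "b \<noteq> a"
  shows "pos (r \<inter> ((S - {a}) \<times> (S - {a}))) b = (if pos r b < pos r a then pos r b else pos r b - 1)"
proof -
  have eq: "{c. (c, b) \<in> r \<inter> ((S - {a}) \<times> (S - {a}))} = {c. (c, b) \<in> r} - {a}"
    using assms(2,4,5) unfolding slo_def by blast
  have fin: "finite {c. (c, b) \<in> r}"
  proof -
    have "{c. (c, b) \<in> r} \<subseteq> S" using assms(2) unfolding slo_def by blast
    then show ?thesis using assms(1) by (rule finite_subset)
  qed
  show ?thesis
  proof (cases "pos r b < pos r a")
    case True
    then have "(a, b) \<notin> r" using pos_mono[OF assms(1,2)] by fastforce
    then show ?thesis using True unfolding eq pos_def by simp
  next
    case False
    then have "pos r a < pos r b" using pos_inj[OF assms(1,2)] assms(3,4,5) unfolding inj_on_def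
      by (metis linorder_neqE_nat)
    then have "(a, b) \<in> r" using pos_less_iff[OF assms(1-4)] by simp
    then show ?thesis using False fin unfolding eq pos_def by simp
  qed
qed

lemma Yface_eq:
  "Yface A i e cl = ((fst cl)(ith_star A cl i := tval e),
     snd cl \<inter> ((stars A (fst cl) - {ith_star A cl i}) \<times> (stars A (fst cl) - {ith_star A cl i})))"
  unfolding Yface_def Let_def by simp

lemma stars_upd:
  assumes "a \<in> stars A c"
  shows "stars A (c(a := tval e)) = stars A c - {a}"
  using assms unfolding stars_def tval_def by auto

lemma slo_restrict: "slo S r \<Longrightarrow> T \<subseteq> S \<Longrightarrow> slo T (r \<inter> (T \<times> T))"
proof -
  assume a: "slo S r" "T \<subseteq> S"
  have "trans (T \<times> T)" by (rule transI) auto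
  then have "trans (r \<inter> (T \<times> T))" using a(1) unfolding slo_def by (auto intro: trans_Int)
  then show ?thesis using a unfolding slo_def irrefl_on_def total_on_def by (auto 0 3 dest: subsetD)
qed

lemma face_valid:
  assumes "finite A" "cl \<in> Ycells A" "1 \<le> i" "i \<le> Ydim A cl"
  shows "Yface A i e cl \<in> Ycells A \<and> Ydim A (Yface A i e cl) = Ydim A cl - 1"
proof -
  let ?a = "ith_star A cl i" and ?S = "stars A (fst cl)"
  have a: "?a \<in> ?S" using ith_star[OF assms] by blast
  then have aA: "?a \<in> A" unfolding stars_def by simp
  have st: "stars A (fst (Yface A i e cl)) = ?S - {?a}"
    unfolding Yface_eq using stars_upd[OF a] by simp
  have "fst (Yface A i e cl) \<in> A \<rightarrow>\<^sub>E UNIV" using assms(2) aA unfolding Ycells_iff Yface_eq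
    by (auto simp: PiE_def extensional_def)
  moreover have "slo (stars A (fst (Yface A i e cl))) (snd (Yface A i e cl))"
    unfolding st by (simp add: Yface_eq slo_restrict[of ?S] assms(2)[unfolded Ycells_iff])
  ultimately show ?thesis unfolding Ycells_iff Ydim_def st
    using a stars_finite[OF assms(1)] by simp
qed

lemma pinv_face:
  assumes "finite A" "cl \<in> Ycells A" "1 \<le> i" "i \<le> Ydim A cl"
  shows "pinv A (Yface A i e cl) x = pinv A cl (delta i e x)"
proof -
  obtain c r where cl: "cl = (c, r)" by (cases cl)
  let ?a = "ith_star A cl i" and ?S = "stars A c"
  have a: "?a \<in> ?S" and pa: "pos r ?a = i - 1" using ith_star[OF assms] cl by auto
  have slo: "slo ?S r" using assms(2) unfolding cl Ycells_iff by simp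
  have fin: "finite ?S" using stars_finite[OF assms(1)] .
  let ?c' = "c(?a := tval e)" and ?r' = "r \<inter> ((?S - {?a}) \<times> (?S - {?a}))"
  have F: "Yface A i e cl = (?c', ?r')" unfolding Yface_eq cl by simp
  have pv: "pval (?c', ?r') x b = pval cl (delta i e x) b" if "b \<in> A" for b
  proof (cases "b = ?a")
    case True
    have "c ?a = Star" using a unfolding stars_def by simp
    then show ?thesis using pa True unfolding pval_def cl delta_def tval_def bval_def by auto
  next
    case False
    show ?thesis
    proof (cases "c b = Star")
      case True
      then have bS: "b \<in> ?S" using that unfolding stars_def by simp
      have "pos ?r' b = (if pos r b < i - 1 then pos r b else pos r b - 1)"
        using face_pos[OF fin slo a bS False] pa by simp
      moreover have "pos r b \<noteq> i - 1" using pos_inj[OF fin slo] a bS False pa unfolding inj_on_def by metis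
      ultimately show ?thesis using True False unfolding pval_def cl delta_def by auto
    next
      case False
      then show ?thesis using \<open>b \<noteq> ?a\<close> unfolding pval_def cl by auto
    qed
  qed
  have rs: "restrict (pval (?c', ?r') x) A = restrict (pval cl (delta i e x)) A"
    using pv by (simp add: restrict_def fun_eq_iff)
  have ie: "intr A (?c', ?r') x = intr A cl (delta i e x)"
    unfolding intr_eq using pv by auto
  have aint: "?a \<notin> intr A cl (delta i e x)"
    using pa by (auto simp: intr_def cl delta_def bval_def)
  have sub: "intr A cl (delta i e x) \<subseteq> ?S"
    unfolding intr_def cl by auto
  show ?thesis unfolding pinv_def F rs ie using aint sub unfolding cl by auto
qed

abbreviation RG :: "'a set \<Rightarrow> ('a ycell \<times> (nat \<Rightarrow> real)) \<Rightarrow> ('a ycell \<times> (nat \<Rightarrow> real)) \<Rightarrow> bool" where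
  "RG A \<equiv> real_gen (Ycells A) (Ydim A) (Yface A)"

lemma real_gen_pinv:
  assumes "finite A" "RG A p q"
  shows "case_prod (pinv A) p = case_prod (pinv A) q"
proof -
  obtain c i e x where "c \<in> Ycells A" "1 \<le> i" "i \<le> Ydim A c"
    "p = (Yface A i e c, x)" "q = (c, delta i e x)"
    using assms(2) unfolding real_gen_def by blast
  then show ?thesis using pinv_face[OF assms(1)] by simp
qed

lemma equivclp_pinv:
  assumes "finite A" "equivclp (RG A) p q"
  shows "case_prod (pinv A) p = case_prod (pinv A) q"
  using assms(2)
proof (induction rule: equivclp_induct)
  case base
  then show ?case by simp
next
  case (step y z)
  then show ?case using real_gen_pinv[OF assms(1)] by metis
qed

lemma rclass_eq_iff:
  "rclass K dm f c x = rclass K dm f c' x' \<longleftrightarrow> equivclp (real_gen K dm f) (c, x) (c', x')"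
proof
  assume "rclass K dm f c x = rclass K dm f c' x'"
  moreover have "(c', x') \<in> rclass K dm f c' x'" unfolding rclass_def by simp
  ultimately show "equivclp (real_gen K dm f) (c, x) (c', x')" unfolding rclass_def by blast
next
  assume h: "equivclp (real_gen K dm f) (c, x) (c', x')"
  have "equivclp (real_gen K dm f) (c, x) q = equivclp (real_gen K dm f) (c', x') q" for q
  proof
    assume "equivclp (real_gen K dm f) (c, x) q"
    then show "equivclp (real_gen K dm f) (c', x') q" using equivclp_trans[OF equivclp_sym[OF h]] by blast
  next
    assume "equivclp (real_gen K dm f) (c', x') q"
    then show "equivclp (real_gen K dm f) (c, x) q" using equivclp_trans[OF h] by blast
  qed
  then show "rclass K dm f c x = rclass K dm f c' x'"
    unfolding rclass_def by auto
qed

lemma intr_from_pinv: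
  assumes "pinv A cl x = pinv A cl' x'"
  shows "intr A cl x = intr A cl' x'"
proof -
  have "\<forall>a\<in>A. pval cl x a = pval cl' x' a"
    using assms unfolding pinv_def by (metis fst_conv restrict_apply')
  then show ?thesis unfolding intr_eq by auto
qed

lemma intr_sub: "intr A cl x \<subseteq> stars A (fst cl)"
  unfolding intr_def by auto

definition nb :: "'a set \<Rightarrow> 'a ycell \<Rightarrow> (nat \<Rightarrow> real) \<Rightarrow> nat" where
  "nb A cl x = card (stars A (fst cl)) - card (intr A cl x)"

lemma reduce:
  assumes "finite A" "cl \<in> Ycells A" "x \<in> cube (Ydim A cl)" "intr A cl x \<noteq> stars A (fst cl)"
  shows "\<exists>cl' x'. cl' \<in> Ycells A \<and> x' \<in> cube (Ydim A cl') \<and> pinv A cl' x' = pinv A cl x \<and>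
           nb A cl' x' < nb A cl x \<and> equivclp (RG A) (cl', x') (cl, x)"
proof -
  let ?S = "stars A (fst cl)" and ?r = "snd cl"
  have fin: "finite ?S" using stars_finite[OF assms(1)] .
  have slo: "slo ?S ?r" using assms(2) Ycells_iff by blast
  have "intr A cl x \<subset> ?S" using assms(4) intr_sub[of A cl x] by (rule psubsetI[rotated])
  then obtain a where a: "a \<in> ?S" "a \<notin> intr A cl x" using psubset_imp_ex_mem by blast
  define j where "j = pos ?r a"
  have jl: "j < Ydim A cl" unfolding j_def Ydim_def using pos_bound[OF fin slo a(1)] .
  have x01: "0 \<le> x j \<and> x j \<le> 1" using assms(3) jl unfolding cube_def by auto
  have xb: "x j = 0 \<or> x j = 1" using a x01 unfolding intr_def j_def by auto
  define e where "e = (x j = 1)"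
  have be: "bval e = x j" using xb unfolding e_def bval_def by auto
  define x' where "x' = (\<lambda>k. if k < j then x k else x (Suc k))"
  define i where "i = Suc j"
  have i1: "1 \<le> i" "i \<le> Ydim A cl" using jl unfolding i_def by auto
  have dx: "delta i e x' = x"
  proof
    fix k show "delta i e x' k = x k"
      unfolding delta_def i_def x'_def using be by auto
  qed
  have x'c: "x' \<in> cube (Ydim A cl - 1)"
    using assms(3) jl unfolding cube_def x'_def by auto
  have ia: "ith_star A cl i = a"
  proof -
    have "ith_star A cl i \<in> ?S" "pos ?r (ith_star A cl i) = j"
      using ith_star[OF assms(1,2) i1] unfolding i_def by auto
    then have "pos ?r (ith_star A cl i) = pos ?r a" "ith_star A cl i \<in> ?S" unfolding j_def by auto
    from inj_onD[OF pos_inj[OF fin slo] this(1,2) a(1)] show ?thesis .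
  qed
  define cl' where "cl' = Yface A i e cl"
  have v: "cl' \<in> Ycells A" "Ydim A cl' = Ydim A cl - 1"
    using face_valid[OF assms(1,2) i1] unfolding cl'_def by auto
  have rg: "RG A (cl', x') (cl, x)"
    unfolding real_gen_def cl'_def
    apply (rule exI[of _ cl], rule exI[of _ i], rule exI[of _ e], rule exI[of _ x'])
    using assms(2) i1 x'c dx by simp
  have pv: "pinv A cl' x' = pinv A cl x"
    unfolding cl'_def pinv_face[OF assms(1,2) i1] dx ..
  have st: "stars A (fst cl') = ?S - {a}"
    unfolding cl'_def Yface_eq ia using stars_upd[OF a(1)] by simp
  have ii: "intr A cl' x' = intr A cl x" using intr_from_pinv[OF pv] .
  have "intr A cl x \<subseteq> ?S - {a}" using a intr_sub[of A cl x] by blast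
  then have "card (intr A cl x) \<le> card (?S - {a})" using fin by (simp add: card_mono)
  moreover have "card (?S - {a}) = card ?S - 1" using a(1) fin by simp
  moreover have "card ?S > 0" using a(1) fin card_gt_0_iff by blast
  ultimately have "nb A cl' x' < nb A cl x" unfolding nb_def st ii by linarith
  moreover have "equivclp (RG A) (cl', x') (cl, x)" using rg by (rule r_into_equivclp)
  ultimately show ?thesis using v pv x'c by (intro exI[of _ cl'] exI[of _ x']) simp
qed

lemma canon_eq:
  assumes "finite A" "cl \<in> Ycells A" "cl' \<in> Ycells A"
    "x \<in> cube (Ydim A cl)" "x' \<in> cube (Ydim A cl')"
    "intr A cl x = stars A (fst cl)" "intr A cl' x' = stars A (fst cl')"
    "pinv A cl x = pinv A cl' x'"
  shows "cl = cl' \<and> x = x'"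
proof -
  obtain c r where cl: "cl = (c, r)" by (cases cl)
  obtain c' r' where cl': "cl' = (c', r')" by (cases cl')
  have pe: "\<forall>a\<in>A. pval cl x a = pval cl' x' a"
    using assms(8) unfolding pinv_def by (metis fst_conv restrict_apply')
  have ie: "intr A cl x = intr A cl' x'" using intr_from_pinv[OF assms(8)] .
  have SS: "stars A c = stars A c'" using assms(6,7) ie cl cl' by simp
  have ce: "c = c'"
  proof
    fix a show "c a = c' a"
    proof (cases "a \<in> A")
      case False
      then show ?thesis using assms(2,3) cl cl' unfolding Ycells_iff by (auto simp: PiE_def extensional_def)
    next
      case True
      show ?thesis
      proof (cases "a \<in> stars A c")
        case True
        then show ?thesis using SS unfolding stars_def by auto
      next
        case False
        then have "c a \<noteq> Star" "c' a \<noteq> Star" using SS \<open>a \<in> A\<close> unfolding stars_def by auto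
        moreover have "pval cl x a = pval cl' x' a" using pe True by simp
        ultimately show ?thesis unfolding pval_def cl cl' by (cases "c a"; cases "c' a") auto
      qed
    qed
  qed
  have slo: "slo (stars A c) r" "slo (stars A c') r'" using assms(2,3) unfolding cl cl' Ycells_iff by simp_all
  have "r \<inter> (intr A cl x \<times> intr A cl x) = r' \<inter> (intr A cl' x' \<times> intr A cl' x')"
    using assms(8) unfolding pinv_def cl cl' by simp
  then have re: "r = r'" using slo assms(6,7) SS unfolding cl cl' slo_def by auto
  have xe: "x = x'"
  proof
    fix k show "x k = x' k"
    proof (cases "k < card (stars A c)")
      case True
      then obtain a where a: "a \<in> stars A c" "pos r a = k"
        using pos_surj[OF stars_finite[OF assms(1)] slo(1)] by blast
      then have "a \<in> A" "c a = Star" unfolding stars_def by auto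
      then have "pval cl x a = pval cl' x' a" using pe by simp
      then show ?thesis using a \<open>c a = Star\<close> ce re unfolding pval_def cl cl' by simp
    next
      case False
      then show ?thesis using assms(4,5) SS unfolding cube_def Ydim_def cl cl' by auto
    qed
  qed
  show ?thesis using ce re xe cl cl' by simp
qed

lemma complete:
  assumes "finite A" "cl \<in> Ycells A" "cl' \<in> Ycells A"
    "x \<in> cube (Ydim A cl)" "x' \<in> cube (Ydim A cl')"
    "pinv A cl x = pinv A cl' x'"
  shows "equivclp (RG A) (cl, x) (cl', x')"
  using assms(2-6)
proof (induction "nb A cl x + nb A cl' x'" arbitrary: cl x cl' x' rule: less_induct)
  case less
  show ?case
  proof (cases "intr A cl x = stars A (fst cl)")
    case False
    then obtain c2 x2 where h: "c2 \<in> Ycells A" "x2 \<in> cube (Ydim A c2)" "pinv A c2 x2 = pinv A cl x"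
      "nb A c2 x2 < nb A cl x" "equivclp (RG A) (c2, x2) (cl, x)"
      using reduce[OF assms(1) less.prems(1,3)] by blast
    have "equivclp (RG A) (c2, x2) (cl', x')"
      using less.hyps[of c2 x2 cl' x'] h less.prems by simp
    then show ?thesis by (meson h(5) equivclp_sym equivclp_trans)
  next
    case T1: True
    show ?thesis
    proof (cases "intr A cl' x' = stars A (fst cl')")
      case False
      then obtain c2 x2 where h: "c2 \<in> Ycells A" "x2 \<in> cube (Ydim A c2)" "pinv A c2 x2 = pinv A cl' x'"
        "nb A c2 x2 < nb A cl' x'" "equivclp (RG A) (c2, x2) (cl', x')"
        using reduce[OF assms(1) less.prems(2,4)] by blast
      have "equivclp (RG A) (cl, x) (c2, x2)"
        using less.hyps[of cl x c2 x2] h less.prems by simp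
      then show ?thesis by (meson h(5) equivclp_sym equivclp_trans)
    next
      case True
      then show ?thesis using canon_eq[OF assms(1) less.prems(1-4) T1 True less.prems(5)] by simp
    qed
  qed
qed

lemma insert_cut:
  assumes "slo X L" "x \<notin> X" "D \<subseteq> X" "\<And>y z. (y, z) \<in> L \<Longrightarrow> z \<in> D \<Longrightarrow> y \<in> D"
  shows "slo (insert x X) (L \<union> D \<times> {x} \<union> {x} \<times> (X - D))"
proof -
  let ?L = "L \<union> D \<times> {x} \<union> {x} \<times> (X - D)"
  have LX: "L \<subseteq> X \<times> X" "trans L" "irrefl L" "total_on X L" using assms(1) unfolding slo_def by auto
  have sub: "?L \<subseteq> insert x X \<times> insert x X" using LX(1) assms(3) by auto
  have tr: "trans ?L"
  proof (rule transI)
    fix a b c assume ab: "(a, b) \<in> ?L" and bc: "(b, c) \<in> ?L"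
    have ab': "(a, b) \<in> L \<or> (a \<in> D \<and> b = x) \<or> (a = x \<and> b \<in> X - D)" using ab by blast
    have bc': "(b, c) \<in> L \<or> (b \<in> D \<and> c = x) \<or> (b = x \<and> c \<in> X - D)" using bc by blast
    have xL: "\<And>u. (u, x) \<notin> L" "\<And>u. (x, u) \<notin> L" using LX(1) assms(2) by auto
    show "(a, c) \<in> ?L"
    proof (cases "(a, b) \<in> L")
      case L1: True
      show ?thesis
      proof (cases "(b, c) \<in> L")
        case True
        then show ?thesis using L1 LX(2) unfolding trans_def by blast
      next
        case False
        then have "b \<in> D \<and> c = x" using bc' L1 xL by blast
        then show ?thesis using assms(4)[OF L1] by blast
      qed
    next
      case False
      then have A: "(a \<in> D \<and> b = x) \<or> (a = x \<and> b \<in> X - D)" using ab' by blast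
      show ?thesis
      proof (cases "b = x")
        case True
        then have "a \<in> D" using A assms(2) by auto
        moreover have "c \<in> X - D" using bc' True xL assms(2,3) by auto
        moreover have "a \<noteq> c" using calculation by auto
        ultimately have "(a, c) \<in> L" using LX(4) assms(3,4) unfolding total_on_def by blast
        then show ?thesis by blast
      next
        case False
        note bx = False
        then have "a = x" "b \<in> X - D" using A by auto
        then have "(b, c) \<in> L \<or> c = x" using bc' bx by blast
        then show ?thesis
        proof
          assume "(b, c) \<in> L"
          then have "c \<in> X" "c \<notin> D" using assms(4) \<open>b \<in> X - D\<close> LX(1) by auto
          then show ?thesis using \<open>a = x\<close> by blast
        next
          assume "c = x"
          then have "b \<in> D" using bc' \<open>b \<in> X - D\<close> xL assms(2) by auto
          then show ?thesis using \<open>b \<in> X - D\<close> by blast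
        qed
      qed
    qed
  qed
  have ir: "irrefl ?L" using LX(3) assms(2,3) unfolding irrefl_on_def by auto
  have to: "total_on (insert x X) ?L" using LX(4) unfolding total_on_def by auto
  show ?thesis unfolding slo_def using sub tr ir to by blast
qed

lemma exists_slo:
  assumes "finite S"
  shows "\<exists>r. slo S r"
  using assms
proof (induction rule: finite_induct)
  case empty
  have "slo {} {}" unfolding slo_def by (auto simp: trans_def irrefl_on_def total_on_def)
  then show ?case by blast
next
  case (insert x F)
  then obtain r where r: "slo F r" by blast
  have "slo (insert x F) (r \<union> F \<times> {x} \<union> {x} \<times> (F - F))"
    by (rule insert_cut[OF r insert(2)]) (use r in \<open>auto simp: slo_def\<close>)
  then show ?case by blast
qed

lemma insert_one:
  assumes "slo X L" "slo X2 L2" "L \<inter> (X2 \<times> X2) = L2 \<inter> (X \<times> X)"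
    "x \<in> X2" "x \<notin> X" "X2 \<subseteq> insert x X"
  shows "\<exists>L'. slo (insert x X) L' \<and> L' \<inter> (X \<times> X) = L \<and> L' \<inter> (X2 \<times> X2) = L2"
proof -
  have LX: "L \<subseteq> X \<times> X" "trans L" "irrefl L" "total_on X L" using assms(1) unfolding slo_def by auto
  have L2X: "L2 \<subseteq> X2 \<times> X2" "trans L2" "irrefl L2" "total_on X2 L2" using assms(2) unfolding slo_def by auto
  define D where "D = {y \<in> X. \<exists>z \<in> X \<inter> X2. (z, x) \<in> L2 \<and> (y = z \<or> (y, z) \<in> L)}"
  have DX: "D \<subseteq> X" unfolding D_def by auto
  have Ddown: "y \<in> D" if h: "(y, z) \<in> L" "z \<in> D" for y z
  proof -
    obtain w where w: "w \<in> X \<inter> X2" "(w, x) \<in> L2" "z = w \<or> (z, w) \<in> L" using h(2) unfolding D_def by blast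
    have "(y, w) \<in> L" using w(3) h(1) LX(2) unfolding trans_def by blast
    then show ?thesis unfolding D_def using w LX(1) by blast
  qed
  have agree: "(a, b) \<in> L \<longleftrightarrow> (a, b) \<in> L2" if "a \<in> X \<inter> X2" "b \<in> X \<inter> X2" for a b
    using assms(3) that by blast
  have Dchar: "y \<in> D \<longleftrightarrow> (y, x) \<in> L2" if yh: "y \<in> X \<inter> X2" for y
  proof
    assume "y \<in> D"
    then obtain z where z: "z \<in> X \<inter> X2" "(z, x) \<in> L2" "y = z \<or> (y, z) \<in> L" unfolding D_def by blast
    show "(y, x) \<in> L2"
    proof (cases "y = z")
      case True then show ?thesis using z by simp
    next
      case False
      then have "(y, z) \<in> L2" using z agree yh by blast
      then show ?thesis using z(2) L2X(2) unfolding trans_def by blast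
    qed
  next
    assume "(y, x) \<in> L2" then show "y \<in> D" unfolding D_def using yh by blast
  qed
  define L' where "L' = L \<union> D \<times> {x} \<union> {x} \<times> (X - D)"
  have s: "slo (insert x X) L'" unfolding L'_def by (rule insert_cut[OF assms(1,5) DX Ddown])
  have e1: "L' \<inter> (X \<times> X) = L" unfolding L'_def using LX(1) assms(5) by auto
  have e2: "L' \<inter> (X2 \<times> X2) = L2"
  proof (intro set_eqI iffI)
    fix p assume p: "p \<in> L' \<inter> (X2 \<times> X2)"
    obtain a b where ab: "p = (a, b)" by (cases p)
    have "a \<in> X2" "b \<in> X2" using p ab by auto
    show "p \<in> L2"
    proof -
      { assume "(a, b) \<in> L" then have ?thesis using agree LX(1) \<open>a \<in> X2\<close> \<open>b \<in> X2\<close> ab by blast }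
      moreover
      { assume "(a, b) \<in> D \<times> {x}" then have "a \<in> D" "b = x" "a \<in> X" using DX by auto
        then have ?thesis using Dchar \<open>a \<in> X2\<close> ab by blast }
      moreover
      { assume "(a, b) \<in> {x} \<times> (X - D)" then have "a = x" "b \<in> X" "b \<notin> D" by auto
        then have "(b, x) \<notin> L2" using Dchar \<open>b \<in> X2\<close> by blast
        moreover have "b \<noteq> x" using \<open>b \<in> X\<close> assms(5) by auto
        ultimately have ?thesis using L2X(4) \<open>a = x\<close> \<open>b \<in> X2\<close> assms(4) ab unfolding total_on_def by blast }
      ultimately show ?thesis using p ab unfolding L'_def by blast
    qed
  next
    fix p assume p: "p \<in> L2"
    obtain a b where ab: "p = (a, b)" by (cases p)
    have ab2: "a \<in> X2" "b \<in> X2" using p ab L2X(1) by auto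
    have nab: "a \<noteq> b" using p ab L2X(3) unfolding irrefl_on_def by auto
    have "(a, b) \<in> L'"
    proof (cases "a = x")
      case True
      then have "b \<in> X" "b \<noteq> x" using ab2 nab assms(6) by auto
      moreover have "(b, x) \<notin> L2" using p ab True L2X(2,3) unfolding trans_def irrefl_on_def by blast
      ultimately have "b \<notin> D" using Dchar ab2 by blast
      then show ?thesis using True \<open>b \<in> X\<close> unfolding L'_def by blast
    next
      case False
      note aX = False
      show ?thesis
      proof (cases "b = x")
        case True
        then have "a \<in> D" using Dchar ab2 aX assms(6) p ab by blast
        then show ?thesis using True unfolding L'_def by blast
      next
        case False
        then have "a \<in> X" "b \<in> X" using aX ab2 assms(6) by auto
        then show ?thesis using agree ab2 p ab unfolding L'_def by blast
      qed
    qed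
    then show "p \<in> L' \<inter> (X2 \<times> X2)" using ab ab2 by blast
  qed
  show ?thesis using s e1 e2 by blast
qed

lemma amalg:
  assumes "finite X2" "slo X1 L1" "slo X2 L2" "L1 \<inter> (X2 \<times> X2) = L2 \<inter> (X1 \<times> X1)"
  shows "\<exists>L. slo (X1 \<union> X2) L \<and> L \<inter> (X1 \<times> X1) = L1 \<and> L \<inter> (X2 \<times> X2) = L2"
proof -
  have fY: "finite (X2 - X1)" using assms(1) by simp
  have "\<forall>X2 L2. finite X2 \<longrightarrow> X2 - X1 = Y \<longrightarrow> slo X2 L2 \<longrightarrow> L1 \<inter> (X2 \<times> X2) = L2 \<inter> (X1 \<times> X1) \<longrightarrow>
          (\<exists>L. slo (X1 \<union> X2) L \<and> L \<inter> (X1 \<times> X1) = L1 \<and> L \<inter> (X2 \<times> X2) = L2)"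
    if "finite Y" for Y
    using that
  proof (induction rule: finite_induct)
    case empty
    show ?case
    proof (intro allI impI)
      fix X2 L2 assume h: "finite X2" "X2 - X1 = {}" "slo X2 L2" "L1 \<inter> (X2 \<times> X2) = L2 \<inter> (X1 \<times> X1)"
      have sub: "X2 \<subseteq> X1" using h(2) by auto
      have "L2 \<subseteq> X2 \<times> X2" using h(3) unfolding slo_def by auto
      then have "L1 \<inter> (X2 \<times> X2) = L2" using h(4) sub by auto
      moreover have "X1 \<union> X2 = X1" using sub by auto
      moreover have "L1 \<inter> (X1 \<times> X1) = L1" using assms(2) unfolding slo_def by auto
      ultimately show "\<exists>L. slo (X1 \<union> X2) L \<and> L \<inter> (X1 \<times> X1) = L1 \<and> L \<inter> (X2 \<times> X2) = L2"
        using assms(2) by (intro exI[of _ L1]) simp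
    qed
  next
    case (insert x F)
    show ?case
    proof (intro allI impI)
      fix X2 L2 assume h: "finite X2" "X2 - X1 = insert x F" "slo X2 L2" "L1 \<inter> (X2 \<times> X2) = L2 \<inter> (X1 \<times> X1)"
      define X2' where "X2' = X2 - {x}"
      define L2' where "L2' = L2 \<inter> (X2' \<times> X2')"
      have x: "x \<in> X2" "x \<notin> X1" using h(2) by auto
      have s2': "slo X2' L2'" unfolding L2'_def X2'_def by (rule slo_restrict[OF h(3)]) auto
      have F: "X2' - X1 = F" using h(2) insert(2) unfolding X2'_def by auto
      have ag: "L1 \<inter> (X2' \<times> X2') = L2' \<inter> (X1 \<times> X1)"
      proof -
        have "L1 \<inter> (X2' \<times> X2') = (L1 \<inter> (X2 \<times> X2)) \<inter> (X2' \<times> X2')" unfolding X2'_def by auto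
        also have "\<dots> = L2' \<inter> (X1 \<times> X1)" unfolding h(4) L2'_def by auto
        finally show ?thesis .
      qed
      have IH: "finite X2' \<longrightarrow> X2' - X1 = F \<longrightarrow> slo X2' L2' \<longrightarrow> L1 \<inter> (X2' \<times> X2') = L2' \<inter> (X1 \<times> X1) \<longrightarrow>
          (\<exists>L. slo (X1 \<union> X2') L \<and> L \<inter> (X1 \<times> X1) = L1 \<and> L \<inter> (X2' \<times> X2') = L2')"
        using insert(3) by blast
      have fin': "finite X2'" unfolding X2'_def using h(1) by simp
      obtain L where L: "slo (X1 \<union> X2') L" "L \<inter> (X1 \<times> X1) = L1" "L \<inter> (X2' \<times> X2') = L2'"
        using IH fin' F s2' ag by blast
      let ?X = "X1 \<union> X2'"
      have LX: "L \<subseteq> ?X \<times> ?X" using L(1) unfolding slo_def by auto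
      have L2X: "L2 \<subseteq> X2 \<times> X2" using h(3) unfolding slo_def by auto
      have XX2: "?X \<inter> X2 = X2'" using x unfolding X2'_def by auto
      have "L \<inter> (X2 \<times> X2) = L \<inter> (X2' \<times> X2')" using LX XX2 by blast
      also have "\<dots> = L2 \<inter> (?X \<times> ?X)" unfolding L(3) L2'_def using L2X XX2 by blast
      finally have ag2: "L \<inter> (X2 \<times> X2) = L2 \<inter> (?X \<times> ?X)" .
      have xX: "x \<notin> ?X" using x unfolding X2'_def by auto
      have sub: "X2 \<subseteq> insert x ?X" unfolding X2'_def by auto
      obtain L' where L': "slo (insert x ?X) L'" "L' \<inter> (?X \<times> ?X) = L" "L' \<inter> (X2 \<times> X2) = L2"
        using insert_one[OF L(1) h(3) ag2 x(1) xX sub] by blast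
      have "insert x ?X = X1 \<union> X2" using x unfolding X2'_def by auto
      moreover have "L' \<inter> (X1 \<times> X1) = L1"
      proof -
        have "L' \<inter> (X1 \<times> X1) = (L' \<inter> (?X \<times> ?X)) \<inter> (X1 \<times> X1)" by auto
        then show ?thesis using L'(2) L(2) by simp
      qed
      ultimately show "\<exists>L. slo (X1 \<union> X2) L \<and> L \<inter> (X1 \<times> X1) = L1 \<and> L \<inter> (X2 \<times> X2) = L2"
        using L'(1,3) by (intro exI[of _ L']) simp
    qed
  qed
  from this[OF fY] show ?thesis using assms by blast
qed

lemma slo_ext:
  assumes "finite A" "X \<subseteq> A" "slo X L"
  shows "\<exists>L'. slo A L' \<and> L' \<inter> (X \<times> X) = L"
proof -
  obtain r where r: "slo (A - X) r" using exists_slo[of "A - X"] assms(1) by auto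
  have "L \<inter> ((A - X) \<times> (A - X)) = r \<inter> (X \<times> X)"
    using r assms(3) unfolding slo_def by auto
  then obtain L' where "slo (X \<union> (A - X)) L'" "L' \<inter> (X \<times> X) = L"
    using amalg[of "A - X" X L r] assms r by auto
  moreover have "X \<union> (A - X) = A" using assms(2) by auto
  ultimately show ?thesis by auto
qed

type_synonym 'a pth = "real \<Rightarrow> ('a ycell \<times> (nat \<Rightarrow> real)) set"

definition INV :: "'a set \<Rightarrow> 'a pth \<Rightarrow> real \<Rightarrow> ('a \<Rightarrow> real) \<times> ('a \<times> 'a) set" where
  "INV A \<alpha> t = (case SOME q. q \<in> \<alpha> t of (cl, x) \<Rightarrow> pinv A cl x)"

definition PP :: "'a set \<Rightarrow> 'a pth \<Rightarrow> real \<Rightarrow> 'a \<Rightarrow> real" where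
  "PP A \<alpha> t = fst (INV A \<alpha> t)"

definition ORD :: "'a set \<Rightarrow> 'a pth \<Rightarrow> real \<Rightarrow> ('a \<times> 'a) set" where
  "ORD A \<alpha> t = snd (INV A \<alpha> t)"

definition II :: "'a set \<Rightarrow> 'a pth \<Rightarrow> real \<Rightarrow> 'a set" where
  "II A \<alpha> t = {a \<in> A. 0 < PP A \<alpha> t a \<and> PP A \<alpha> t a < 1}"

abbreviation RC :: "'a set \<Rightarrow> 'a ycell \<Rightarrow> (nat \<Rightarrow> real) \<Rightarrow> ('a ycell \<times> (nat \<Rightarrow> real)) set" where
  "RC A \<equiv> rclass (Ycells A) (Ydim A) (Yface A)"

lemma INV_eq:
  assumes "finite A" "\<alpha> t = RC A cl x"
  shows "INV A \<alpha> t = pinv A cl x"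
proof -
  have ex: "(cl, x) \<in> \<alpha> t" unfolding assms(2) rclass_def by simp
  define q where "q = (SOME q. q \<in> \<alpha> t)"
  have "q \<in> \<alpha> t" unfolding q_def using ex by (rule someI)
  then have "equivclp (RG A) (cl, x) q" unfolding assms(2) rclass_def by simp
  then have "case_prod (pinv A) (cl, x) = case_prod (pinv A) q" by (rule equivclp_pinv[OF assms(1)])
  then show ?thesis unfolding INV_def q_def[symmetric] by (cases q) simp
qed

lemma pval_bounds:
  assumes "finite A" "cl \<in> Ycells A" "x \<in> cube (Ydim A cl)" "a \<in> A"
  shows "0 \<le> pval cl x a \<and> pval cl x a \<le> 1"
proof (cases "fst cl a = Star")
  case True
  then have aS: "a \<in> stars A (fst cl)" unfolding stars_def using assms(4) by simp
  have slo: "slo (stars A (fst cl)) (snd cl)" using assms(2) Ycells_iff by blast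
  have "pos (snd cl) a < Ydim A cl" unfolding Ydim_def using pos_bound[OF stars_finite[OF assms(1)] slo aS] .
  then have "0 \<le> x (pos (snd cl) a) \<and> x (pos (snd cl) a) \<le> 1" using assms(3) unfolding cube_def by blast
  then show ?thesis using True unfolding pval_def by simp
next
  case False
  then show ?thesis unfolding pval_def by auto
qed

lemma rep_facts:
  assumes "finite A" "cl \<in> Ycells A" "x \<in> cube (Ydim A cl)" "\<alpha> t = RC A cl x"
  shows "(\<forall>a\<in>A. PP A \<alpha> t a = pval cl x a) \<and> II A \<alpha> t = intr A cl x \<and>
         ORD A \<alpha> t = snd cl \<inter> (II A \<alpha> t \<times> II A \<alpha> t) \<and>
         (\<forall>a\<in>A. 0 \<le> PP A \<alpha> t a \<and> PP A \<alpha> t a \<le> 1) \<and> PP A \<alpha> t \<in> extensional A"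
proof -
  have I: "INV A \<alpha> t = pinv A cl x" using INV_eq[of A \<alpha> t cl x] assms(1,4) by blast
  have P: "\<forall>a\<in>A. PP A \<alpha> t a = pval cl x a" unfolding PP_def I pinv_def by simp
  have II: "II A \<alpha> t = intr A cl x" unfolding II_def intr_eq using P by auto
  have O: "ORD A \<alpha> t = snd cl \<inter> (II A \<alpha> t \<times> II A \<alpha> t)" unfolding II using I unfolding ORD_def pinv_def by simp
  have E: "PP A \<alpha> t \<in> extensional A" unfolding PP_def I pinv_def by simp
  show ?thesis using P II O E pval_bounds[OF assms(1-3)] by simp
qed

lemma ts_nonneg:
  assumes "ts 0 = (0::real)" "\<forall>k<m. ts k < ts (Suc k)"
  shows "k \<le> m \<Longrightarrow> 0 \<le> ts k"
proof (induction k)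
  case 0 then show ?case using assms(1) by simp
next
  case (Suc k)
  then have "0 \<le> ts k" "k < m" by auto
  then show ?case using assms(2) by force
qed

lemma restr_sub: "X \<subseteq> D \<Longrightarrow> R \<inter> (X \<times> X) = (R \<inter> (D \<times> D)) \<inter> (X \<times> X)"
  by auto

lemma Yzero_facts:
  "Yzero A \<in> Ycells A" "Ydim A (Yzero A) = 0" "zero_vec \<in> cube 0"
  "a \<in> A \<Longrightarrow> pval (Yzero A) x a = 0"
proof -
  have st: "stars A (fst (Yzero A)) = {}" unfolding Yzero_def stars_def by auto
  have "slo {} ({}::('a \<times> 'a) set)" unfolding slo_def by (auto simp: trans_def irrefl_on_def total_on_def)
  then show "Yzero A \<in> Ycells A" unfolding Ycells_iff st by (simp add: Yzero_def)
  show "Ydim A (Yzero A) = 0" unfolding Ydim_def st by simp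
  show "zero_vec \<in> cube 0" unfolding cube_def zero_vec_def by simp
  show "a \<in> A \<Longrightarrow> pval (Yzero A) x a = 0" unfolding pval_def Yzero_def by simp
qed

lemma Yone_facts:
  "Yone A \<in> Ycells A" "Ydim A (Yone A) = 0"
  "a \<in> A \<Longrightarrow> pval (Yone A) x a = 1"
proof -
  have st: "stars A (fst (Yone A)) = {}" unfolding Yone_def stars_def by auto
  have "slo {} ({}::('a \<times> 'a) set)" unfolding slo_def by (auto simp: trans_def irrefl_on_def total_on_def)
  then show "Yone A \<in> Ycells A" unfolding Ycells_iff st by (simp add: Yone_def)
  show "Ydim A (Yone A) = 0" unfolding Ydim_def st by simp
  show "a \<in> A \<Longrightarrow> pval (Yone A) x a = 1" unfolding pval_def Yone_def by simp
qed

lemma main_ind: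
  fixes \<alpha> :: "'a pth"
  assumes fin: "finite A" and t0: "ts 0 = 0" and inc: "\<forall>k<m. ts k < ts (Suc k)"
    and pc: "\<forall>k\<in>{1..m}. cs k \<in> Ycells A \<and> continuous_on {ts (k - 1)..ts k} (\<beta>s k) \<and>
            (\<forall>t\<in>{ts (k - 1)..ts k}. \<beta>s k t \<in> cube (Ydim A (cs k))) \<and>
            mono_coords {ts (k - 1)..ts k} (\<beta>s k) \<and>
            (\<forall>t\<in>{ts (k - 1)..ts k}. \<alpha> t = RC A (cs k) (\<beta>s k t))"
    and st: "\<alpha> 0 = RC A (Yzero A) zero_vec"
  shows "k \<le> m \<Longrightarrow> (\<forall>a\<in>A. continuous_on {0..ts k} (\<lambda>t. PP A \<alpha> t a)) \<and>
     (\<forall>a\<in>A. \<forall>s t. 0 \<le> s \<longrightarrow> s \<le> t \<longrightarrow> t \<le> ts k \<longrightarrow> PP A \<alpha> s a \<le> PP A \<alpha> t a) \<and>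
     (\<forall>t\<in>{0..ts k}. \<exists>cl x. cl \<in> Ycells A \<and> x \<in> cube (Ydim A cl) \<and> \<alpha> t = RC A cl x) \<and>
     (\<exists>L. slo A L \<and> (\<forall>t\<in>{0..ts k}. ORD A \<alpha> t = L \<inter> (II A \<alpha> t \<times> II A \<alpha> t)))"
proof (induction k)
  case 0
  have yzc: "zero_vec \<in> cube (Ydim A (Yzero A))" unfolding Yzero_facts(2)[of A] by (rule Yzero_facts(3))
  note rf = rep_facts[of A "Yzero A" zero_vec \<alpha> 0, OF fin Yzero_facts(1) yzc st]
  have P0: "\<forall>a\<in>A. PP A \<alpha> 0 a = 0"
  proof
    fix a assume "a \<in> A"
    then have "pval (Yzero A) zero_vec a = 0" by (rule Yzero_facts(4))
    then show "PP A \<alpha> 0 a = 0" using rf \<open>a \<in> A\<close> by simp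
  qed
  have I0: "II A \<alpha> 0 = {}" unfolding II_def using P0 by auto
  have O0: "ORD A \<alpha> 0 = {}" using rf I0 by simp
  obtain L where L: "slo A L" using exists_slo[OF fin] by blast
  have "\<forall>t\<in>{0..ts 0}. ORD A \<alpha> t = L \<inter> (II A \<alpha> t \<times> II A \<alpha> t)" using t0 O0 I0 by simp
  moreover have "\<forall>t\<in>{0..ts 0}. \<exists>cl x. cl \<in> Ycells A \<and> x \<in> cube (Ydim A cl) \<and> \<alpha> t = RC A cl x"
  proof
    fix t assume "t \<in> {0..ts 0}"
    then have "t = 0" using t0 by simp
    then show "\<exists>cl x. cl \<in> Ycells A \<and> x \<in> cube (Ydim A cl) \<and> \<alpha> t = RC A cl x"
      using st Yzero_facts(1)[of A] yzc by blast
  qed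
  moreover have "\<forall>a\<in>A. continuous_on {0..ts 0} (\<lambda>t. PP A \<alpha> t a)" using t0 by simp
  moreover have "\<forall>a\<in>A. \<forall>s t. 0 \<le> s \<longrightarrow> s \<le> t \<longrightarrow> t \<le> ts 0 \<longrightarrow> PP A \<alpha> s a \<le> PP A \<alpha> t a"
    using t0 by (metis order.antisym order.trans order_refl)
  ultimately show ?case using L by blast
next
  case (Suc k)
  then have km: "k < m" by simp
  from Suc.IH km have IH1: "\<forall>a\<in>A. continuous_on {0..ts k} (\<lambda>t. PP A \<alpha> t a)"
    and IH2: "\<forall>a\<in>A. \<forall>s t. 0 \<le> s \<longrightarrow> s \<le> t \<longrightarrow> t \<le> ts k \<longrightarrow> PP A \<alpha> s a \<le> PP A \<alpha> t a"
    and IH3: "\<forall>t\<in>{0..ts k}. \<exists>cl x. cl \<in> Ycells A \<and> x \<in> cube (Ydim A cl) \<and> \<alpha> t = RC A cl x"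
    and IH4: "\<exists>L. slo A L \<and> (\<forall>t\<in>{0..ts k}. ORD A \<alpha> t = L \<inter> (II A \<alpha> t \<times> II A \<alpha> t))"
    by auto
  define T where "T = ts k"
  define T' where "T' = ts (Suc k)"
  have TT: "T < T'" "0 \<le> T" using inc km ts_nonneg[OF t0 inc, of k] unfolding T_def T'_def by auto
  define cl where "cl = cs (Suc k)"
  define \<beta> where "\<beta> = \<beta>s (Suc k)"
  have "Suc k \<in> {1..m}" using km by simp
  then have pck: "cs (Suc k) \<in> Ycells A \<and> continuous_on {ts (Suc k - 1)..ts (Suc k)} (\<beta>s (Suc k)) \<and>
            (\<forall>t\<in>{ts (Suc k - 1)..ts (Suc k)}. \<beta>s (Suc k) t \<in> cube (Ydim A (cs (Suc k)))) \<and>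
            mono_coords {ts (Suc k - 1)..ts (Suc k)} (\<beta>s (Suc k)) \<and>
            (\<forall>t\<in>{ts (Suc k - 1)..ts (Suc k)}. \<alpha> t = RC A (cs (Suc k)) (\<beta>s (Suc k) t))"
    using pc by blast
  then have pcj: "cl \<in> Ycells A" "continuous_on {T..T'} \<beta>" "\<forall>t\<in>{T..T'}. \<beta> t \<in> cube (Ydim A cl)"
    "mono_coords {T..T'} \<beta>" "\<forall>t\<in>{T..T'}. \<alpha> t = RC A cl (\<beta> t)"
    unfolding T_def T'_def cl_def \<beta>_def by simp_all
  have rep: "(\<forall>a\<in>A. PP A \<alpha> t a = pval cl (\<beta> t) a) \<and> II A \<alpha> t = intr A cl (\<beta> t) \<and>
         ORD A \<alpha> t = snd cl \<inter> (II A \<alpha> t \<times> II A \<alpha> t)" if "t \<in> {T..T'}" for t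
    using rep_facts[of A cl "\<beta> t" \<alpha> t, OF fin pcj(1) pcj(3)[rule_format, OF that] pcj(5)[rule_format, OF that]] by blast
  have cont2: "continuous_on {T..T'} (\<lambda>t. PP A \<alpha> t a)" if aA: "a \<in> A" for a
  proof -
    have "continuous_on {T..T'} (\<lambda>t. pval cl (\<beta> t) a)"
    proof (cases "fst cl a = Star")
      case True
      then show ?thesis unfolding pval_def
        using continuous_on_product_then_coordinatewise[OF pcj(2)] by simp
    next
      case False
      then show ?thesis unfolding pval_def by simp
    qed
    moreover have "\<And>t. t \<in> {T..T'} \<Longrightarrow> pval cl (\<beta> t) a = PP A \<alpha> t a"
    proof -
      fix t assume "t \<in> {T..T'}"
      then have "\<forall>a\<in>A. PP A \<alpha> t a = pval cl (\<beta> t) a" using rep by blast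
      then show "pval cl (\<beta> t) a = PP A \<alpha> t a" using aA by simp
    qed
    ultimately show ?thesis by (rule continuous_on_eq)
  qed
  have mono2: "PP A \<alpha> s a \<le> PP A \<alpha> t a" if "a \<in> A" "T \<le> s" "s \<le> t" "t \<le> T'" for a s t
  proof -
    have "\<beta> s i \<le> \<beta> t i" for i using pcj(4) that unfolding mono_coords_def by auto
    then have "pval cl (\<beta> s) a \<le> pval cl (\<beta> t) a" unfolding pval_def by simp
    moreover have "\<forall>a\<in>A. PP A \<alpha> s a = pval cl (\<beta> s) a" using rep[of s] that by simp
    moreover have "\<forall>a\<in>A. PP A \<alpha> t a = pval cl (\<beta> t) a" using rep[of t] that by simp
    ultimately show ?thesis using that(1) by simp
  qed
  have un: "{0..T'} = {0..T} \<union> {T..T'}" using TT by auto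
  have C1: "\<forall>a\<in>A. continuous_on {0..T'} (\<lambda>t. PP A \<alpha> t a)"
  proof
    fix a assume aA: "a \<in> A"
    have "continuous_on ({0..T} \<union> {T..T'}) (\<lambda>t. PP A \<alpha> t a)"
      by (rule continuous_on_closed_Un) (use IH1 cont2[OF aA] aA in \<open>simp_all add: T_def\<close>)
    then show "continuous_on {0..T'} (\<lambda>t. PP A \<alpha> t a)" unfolding un .
  qed
  have C2: "\<forall>a\<in>A. \<forall>s t. 0 \<le> s \<longrightarrow> s \<le> t \<longrightarrow> t \<le> T' \<longrightarrow> PP A \<alpha> s a \<le> PP A \<alpha> t a"
  proof (intro ballI allI impI)
    fix a s t assume h: "a \<in> A" "0 \<le> s" "s \<le> t" "t \<le> T'"
    show "PP A \<alpha> s a \<le> PP A \<alpha> t a"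
    proof (cases "t \<le> T")
      case True then show ?thesis using IH2 h unfolding T_def by blast
    next
      case False
      show ?thesis
      proof (cases "s \<le> T")
        case True
        then have "PP A \<alpha> s a \<le> PP A \<alpha> T a" using IH2 h unfolding T_def by blast
        also have "\<dots> \<le> PP A \<alpha> t a" using mono2[of a T t] h False by simp
        finally show ?thesis .
      next
        case False
        then show ?thesis using mono2[of a s t] h by simp
      qed
    qed
  qed
  have C3: "\<forall>t\<in>{0..T'}. \<exists>cl x. cl \<in> Ycells A \<and> x \<in> cube (Ydim A cl) \<and> \<alpha> t = RC A cl x"
  proof
    fix t assume "t \<in> {0..T'}"
    then show "\<exists>cl x. cl \<in> Ycells A \<and> x \<in> cube (Ydim A cl) \<and> \<alpha> t = RC A cl x"
    proof (cases "t \<le> T")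
      case True then show ?thesis using IH3 \<open>t \<in> {0..T'}\<close> unfolding T_def by auto
    next
      case False
      then have "t \<in> {T..T'}" using \<open>t \<in> {0..T'}\<close> by auto
      then show ?thesis using pcj(1) pcj(3,5) by blast
    qed
  qed
  obtain L0 where L0: "slo A L0" "\<forall>t\<in>{0..T}. ORD A \<alpha> t = L0 \<inter> (II A \<alpha> t \<times> II A \<alpha> t)"
    using IH4 unfolding T_def by blast
  define D where "D = {a \<in> A. 0 < PP A \<alpha> T a}"
  define S' where "S' = {a \<in> stars A (fst cl). PP A \<alpha> T a < 1}"
  have slor: "slo (stars A (fst cl)) (snd cl)" using pcj(1) Ycells_iff by blast
  have TTs: "T \<in> {T..T'}" "T \<in> {0..T}" using TT by auto
  have IIT: "II A \<alpha> T \<subseteq> stars A (fst cl)" using rep[OF TTs(1)] intr_sub by metis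
  have OT: "ORD A \<alpha> T = snd cl \<inter> (II A \<alpha> T \<times> II A \<alpha> T)" "ORD A \<alpha> T = L0 \<inter> (II A \<alpha> T \<times> II A \<alpha> T)"
    using rep[OF TTs(1)] L0(2) TTs(2) by auto
  have DS: "D \<inter> S' = II A \<alpha> T" using IIT unfolding D_def S'_def II_def stars_def by auto
  have DA: "D \<subseteq> A" unfolding D_def by auto
  have SA: "S' \<subseteq> stars A (fst cl)" unfolding S'_def by auto
  have SA2: "stars A (fst cl) \<subseteq> A" unfolding stars_def by auto
  have s1: "slo D (L0 \<inter> (D \<times> D))" by (rule slo_restrict[OF L0(1) DA])
  have s2: "slo S' (snd cl \<inter> (S' \<times> S'))" by (rule slo_restrict[OF slor SA])
  have ag: "(L0 \<inter> (D \<times> D)) \<inter> (S' \<times> S') = (snd cl \<inter> (S' \<times> S')) \<inter> (D \<times> D)"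
  proof -
    have "(L0 \<inter> (D \<times> D)) \<inter> (S' \<times> S') = L0 \<inter> ((D \<inter> S') \<times> (D \<inter> S'))" by auto
    also have "\<dots> = snd cl \<inter> ((D \<inter> S') \<times> (D \<inter> S'))" unfolding DS using OT by simp
    also have "\<dots> = (snd cl \<inter> (S' \<times> S')) \<inter> (D \<times> D)" by auto
    finally show ?thesis .
  qed
  have finS: "finite S'" using finite_subset[OF SA stars_finite[OF fin]] .
  obtain L' where L': "slo (D \<union> S') L'" "L' \<inter> (D \<times> D) = L0 \<inter> (D \<times> D)" "L' \<inter> (S' \<times> S') = snd cl \<inter> (S' \<times> S')"
    using amalg[OF finS s1 s2 ag] by blast
  have DSA: "D \<union> S' \<subseteq> A" using DA SA SA2 by auto
  obtain L where L: "slo A L" "L \<inter> ((D \<union> S') \<times> (D \<union> S')) = L'"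
    using slo_ext[OF fin DSA L'(1)] by blast
  have LD: "L \<inter> (D \<times> D) = L0 \<inter> (D \<times> D)"
  proof -
    have "L \<inter> (D \<times> D) = (L \<inter> ((D \<union> S') \<times> (D \<union> S'))) \<inter> (D \<times> D)" by auto
    then show ?thesis using L(2) L'(2) by simp
  qed
  have LS: "L \<inter> (S' \<times> S') = snd cl \<inter> (S' \<times> S')"
  proof -
    have "L \<inter> (S' \<times> S') = (L \<inter> ((D \<union> S') \<times> (D \<union> S'))) \<inter> (S' \<times> S')" by auto
    then show ?thesis using L(2) L'(3) by simp
  qed
  have C4: "\<forall>t\<in>{0..T'}. ORD A \<alpha> t = L \<inter> (II A \<alpha> t \<times> II A \<alpha> t)"
  proof
    fix t assume t: "t \<in> {0..T'}"
    show "ORD A \<alpha> t = L \<inter> (II A \<alpha> t \<times> II A \<alpha> t)"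
    proof (cases "t \<le> T")
      case True
      have sub: "II A \<alpha> t \<subseteq> D"
      proof
        fix a assume "a \<in> II A \<alpha> t"
        then have "a \<in> A" "0 < PP A \<alpha> t a" unfolding II_def by auto
        moreover have "PP A \<alpha> t a \<le> PP A \<alpha> T a"
          using IH2[rule_format, OF \<open>a \<in> A\<close>, of t T] t True unfolding T_def by simp
        ultimately show "a \<in> D" unfolding D_def by auto
      qed
      have "ORD A \<alpha> t = L0 \<inter> (II A \<alpha> t \<times> II A \<alpha> t)" using L0(2) t True by auto
      also have "\<dots> = (L0 \<inter> (D \<times> D)) \<inter> (II A \<alpha> t \<times> II A \<alpha> t)" by (rule restr_sub[OF sub])
      also have "\<dots> = (L \<inter> (D \<times> D)) \<inter> (II A \<alpha> t \<times> II A \<alpha> t)" unfolding LD ..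
      also have "\<dots> = L \<inter> (II A \<alpha> t \<times> II A \<alpha> t)" by (rule restr_sub[OF sub, symmetric])
      finally show ?thesis .
    next
      case False
      then have tT: "t \<in> {T..T'}" using t by auto
      have sub: "II A \<alpha> t \<subseteq> S'"
      proof
        fix a assume aI: "a \<in> II A \<alpha> t"
        then have "a \<in> A" "PP A \<alpha> t a < 1" unfolding II_def by auto
        moreover have "PP A \<alpha> T a \<le> PP A \<alpha> t a" using mono2[of a T t] \<open>a \<in> A\<close> tT by auto
        moreover have "a \<in> stars A (fst cl)"
        proof -
          have "II A \<alpha> t = intr A cl (\<beta> t)" using rep[OF tT] by blast
          then have "a \<in> intr A cl (\<beta> t)" using aI by simp
          then show ?thesis using intr_sub[of A cl "\<beta> t"] by blast
        qed
        ultimately show "a \<in> S'" unfolding S'_def by auto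
      qed
      have "ORD A \<alpha> t = snd cl \<inter> (II A \<alpha> t \<times> II A \<alpha> t)" using rep[OF tT] by blast
      also have "\<dots> = (snd cl \<inter> (S' \<times> S')) \<inter> (II A \<alpha> t \<times> II A \<alpha> t)" by (rule restr_sub[OF sub])
      also have "\<dots> = (L \<inter> (S' \<times> S')) \<inter> (II A \<alpha> t \<times> II A \<alpha> t)" unfolding LS ..
      also have "\<dots> = L \<inter> (II A \<alpha> t \<times> II A \<alpha> t)" by (rule restr_sub[OF sub, symmetric])
      finally show ?thesis .
    qed
  qed
  have C4': "\<exists>L. slo A L \<and> (\<forall>t\<in>{0..T'}. ORD A \<alpha> t = L \<inter> (II A \<alpha> t \<times> II A \<alpha> t))"
    using C4 L(1) by blast
  show ?case using C1 C2 C3 C4' unfolding T'_def by (intro conjI)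
qed

lemma nth_facts:
  assumes "finite A" "slo A L" "j < card A"
  shows "(THE a. a \<in> A \<and> pos L a = j) \<in> A \<and> pos L (THE a. a \<in> A \<and> pos L a = j) = j"
  using theI'[OF pos_surj[OF assms]] .

lemma nth_pos:
  assumes "finite A" "slo A L" "a \<in> A"
  shows "(THE b. b \<in> A \<and> pos L b = pos L a) = a"
proof (rule the_equality)
  show "a \<in> A \<and> pos L a = pos L a" using assms(3) by simp
next
  fix b assume "b \<in> A \<and> pos L b = pos L a"
  then show "b = a" using pos_inj[OF assms(1,2)] assms(3) unfolding inj_on_def by blast
qed

theorem proposition3p3:
  fixes A :: "'a set" and n :: nat and \<alpha> :: "real \<Rightarrow> ('a ycell \<times> (nat \<Rightarrow> real)) set"
  assumes "finite A" and "card A = n"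
    and "dpath (Ycells A) (Ydim A) (Yface A) \<alpha>"
    and "\<alpha> 0 = rclass (Ycells A) (Ydim A) (Yface A) (Yzero A) zero_vec"
    and "\<alpha> 1 = rclass (Ycells A) (Ydim A) (Yface A) (Yone A) zero_vec"
  shows "\<exists>c \<beta>. c \<in> Ycells A \<and> Ydim A c = n \<and>
           continuous_on {0..1} \<beta> \<and> (\<forall>t\<in>{0..1}. \<beta> t \<in> cube n) \<and>
           mono_coords {0..1} \<beta> \<and> \<beta> 0 = zero_vec \<and> \<beta> 1 = one_vec n \<and>
           (\<forall>t\<in>{0..1}. \<alpha> t = rclass (Ycells A) (Ydim A) (Yface A) c (\<beta> t))"
proof -
  obtain m ts cs \<beta>s where D: "1 \<le> m" "ts 0 = 0" "ts m = 1" "\<forall>k<m. ts k < ts (Suc k)"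
    "\<forall>k\<in>{1..m}. cs k \<in> Ycells A \<and> continuous_on {ts (k - 1)..ts k} (\<beta>s k) \<and>
            (\<forall>t\<in>{ts (k - 1)..ts k}. \<beta>s k t \<in> cube (Ydim A (cs k))) \<and>
            mono_coords {ts (k - 1)..ts k} (\<beta>s k) \<and>
            (\<forall>t\<in>{ts (k - 1)..ts k}. \<alpha> t = RC A (cs k) (\<beta>s k t))"
    using assms(3) unfolding dpath_def by blast
  have MI: "(\<forall>a\<in>A. continuous_on {0..ts m} (\<lambda>t. PP A \<alpha> t a)) \<and>
     (\<forall>a\<in>A. \<forall>s t. 0 \<le> s \<longrightarrow> s \<le> t \<longrightarrow> t \<le> ts m \<longrightarrow> PP A \<alpha> s a \<le> PP A \<alpha> t a) \<and>
     (\<forall>t\<in>{0..ts m}. \<exists>cl x. cl \<in> Ycells A \<and> x \<in> cube (Ydim A cl) \<and> \<alpha> t = RC A cl x) \<and>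
     (\<exists>L. slo A L \<and> (\<forall>t\<in>{0..ts m}. ORD A \<alpha> t = L \<inter> (II A \<alpha> t \<times> II A \<alpha> t)))"
    by (rule main_ind[OF assms(1) D(2) D(4) D(5) assms(4)]) simp
  then have M1: "\<forall>a\<in>A. continuous_on {0..1} (\<lambda>t. PP A \<alpha> t a)"
    and M2: "\<forall>a\<in>A. \<forall>s t. 0 \<le> s \<longrightarrow> s \<le> t \<longrightarrow> t \<le> 1 \<longrightarrow> PP A \<alpha> s a \<le> PP A \<alpha> t a"
    and M3: "\<forall>t\<in>{0..1}. \<exists>cl x. cl \<in> Ycells A \<and> x \<in> cube (Ydim A cl) \<and> \<alpha> t = RC A cl x"
    and M4: "\<exists>L. slo A L \<and> (\<forall>t\<in>{0..1}. ORD A \<alpha> t = L \<inter> (II A \<alpha> t \<times> II A \<alpha> t))"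
    unfolding D(3) by auto
  obtain L where L: "slo A L" "\<forall>t\<in>{0..1}. ORD A \<alpha> t = L \<inter> (II A \<alpha> t \<times> II A \<alpha> t)"
    using M4 by blast
  define nth where "nth j = (THE a. a \<in> A \<and> pos L a = j)" for j
  define \<beta> where "\<beta> t = (\<lambda>j. if j < n then PP A \<alpha> t (nth j) else 0)" for t
  define c where "c = ((\<lambda>a\<in>A. Star), L)"
  have st: "stars A (fst c) = A" unfolding c_def stars_def by auto
  have cY: "c \<in> Ycells A" unfolding Ycells_iff st using L(1) by (simp add: c_def)
  have cD: "Ydim A c = n" unfolding Ydim_def st using assms(2) .
  have nthA: "nth j \<in> A" if "j < n" for j
    using nth_facts[OF assms(1) L(1)] that assms(2) unfolding nth_def by blast
  have bpos: "\<beta> t (pos L a) = PP A \<alpha> t a" if "a \<in> A" for t a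
  proof -
    have "pos L a < n" using pos_bound[OF assms(1) L(1) that] assms(2) by simp
    moreover have "nth (pos L a) = a" unfolding nth_def using nth_pos[OF assms(1) L(1) that] .
    ultimately show ?thesis unfolding \<beta>_def by simp
  qed
  have rep: "\<exists>cl x. cl \<in> Ycells A \<and> x \<in> cube (Ydim A cl) \<and> \<alpha> t = RC A cl x" if "t \<in> {0..1}" for t
    using M3 that by blast
  have bnd: "0 \<le> PP A \<alpha> t a \<and> PP A \<alpha> t a \<le> 1"
    if th: "t \<in> {0..1}" "a \<in> A" for t a
  proof -
    obtain cl x where h: "cl \<in> Ycells A" "x \<in> cube (Ydim A cl)" "\<alpha> t = RC A cl x" using rep[OF th(1)] by blast
    note rf = rep_facts[of A cl x \<alpha> t, OF assms(1) h]
    show "0 \<le> PP A \<alpha> t a \<and> PP A \<alpha> t a \<le> 1" using rf th(2) by blast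
  qed
  have bext: "PP A \<alpha> t \<in> extensional A" if th: "t \<in> {0..1}" for t
  proof -
    obtain cl x where h: "cl \<in> Ycells A" "x \<in> cube (Ydim A cl)" "\<alpha> t = RC A cl x" using rep[OF th(1)] by blast
    note rf = rep_facts[of A cl x \<alpha> t, OF assms(1) h]
    show "PP A \<alpha> t \<in> extensional A" using rf by blast
  qed
  have cube: "\<beta> t \<in> cube n" if "t \<in> {0..1}" for t
  proof -
    have "\<forall>j<n. 0 \<le> \<beta> t j \<and> \<beta> t j \<le> 1"
    proof (intro allI impI)
      fix j assume "j < n"
      then show "0 \<le> \<beta> t j \<and> \<beta> t j \<le> 1" unfolding \<beta>_def using bnd[OF that nthA[OF \<open>j < n\<close>]] by simp
    qed
    moreover have "\<forall>j\<ge>n. \<beta> t j = 0" unfolding \<beta>_def by simp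
    ultimately show ?thesis unfolding cube_def by blast
  qed
  have pvc: "pval c (\<beta> t) a = PP A \<alpha> t a" if "a \<in> A" for t a
    unfolding pval_def using that bpos[OF that] by (simp add: c_def)
  have pinv_c: "pinv A c (\<beta> t) = INV A \<alpha> t" if "t \<in> {0..1}" for t
  proof -
    have r: "restrict (pval c (\<beta> t)) A = PP A \<alpha> t"
    proof
      fix a show "restrict (pval c (\<beta> t)) A a = PP A \<alpha> t a"
      proof (cases "a \<in> A")
        case True then show ?thesis using pvc by simp
      next
        case False
        have "PP A \<alpha> t a = undefined" using bext[OF that] False by (rule extensional_arb)
        then show ?thesis using False by simp
      qed
    qed
    have i: "intr A c (\<beta> t) = II A \<alpha> t" unfolding intr_eq II_def
    proof (rule set_eqI)
      fix a show "a \<in> {a \<in> A. 0 < pval c (\<beta> t) a \<and> pval c (\<beta> t) a < 1} \<longleftrightarrow>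
        a \<in> {a \<in> A. 0 < PP A \<alpha> t a \<and> PP A \<alpha> t a < 1}"
        by (cases "a \<in> A") (simp_all add: pvc)
    qed
    have "INV A \<alpha> t = (PP A \<alpha> t, ORD A \<alpha> t)" unfolding PP_def ORD_def by simp
    moreover have "ORD A \<alpha> t = L \<inter> (II A \<alpha> t \<times> II A \<alpha> t)" using L(2) that by blast
    ultimately show ?thesis unfolding pinv_def r i by (simp add: c_def)
  qed
  have alpha: "\<alpha> t = RC A c (\<beta> t)" if th: "t \<in> {0..1}" for t
  proof -
    obtain cl x where h: "cl \<in> Ycells A" "x \<in> cube (Ydim A cl)" "\<alpha> t = RC A cl x" using rep[OF th] by blast
    have "INV A \<alpha> t = pinv A cl x" using INV_eq[of A \<alpha> t cl x] assms(1) h(3) by blast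
    then have "pinv A cl x = pinv A c (\<beta> t)" using pinv_c[OF th] by simp
    moreover have "\<beta> t \<in> cube (Ydim A c)" using cube[OF th] cD by simp
    ultimately have "equivclp (RG A) (cl, x) (c, \<beta> t)" using complete[OF assms(1) h(1) cY h(2)] by blast
    then show ?thesis using h(3) rclass_eq_iff by metis
  qed
  have cont: "continuous_on {0..1} \<beta>"
  proof (rule continuous_on_coordinatewise_then_product)
    fix j show "continuous_on {0..1} (\<lambda>t. \<beta> t j)"
    proof (cases "j < n")
      case True then show ?thesis unfolding \<beta>_def using M1 nthA[OF True] by simp
    next
      case False then show ?thesis unfolding \<beta>_def by simp
    qed
  qed
  have mono: "mono_coords {0..1} \<beta>"
    unfolding mono_coords_def \<beta>_def using M2 nthA by auto
  have z0: "0 \<in> {0..(1::real)}" "1 \<in> {0..(1::real)}" by auto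
  have P0: "PP A \<alpha> 0 a = 0" if "a \<in> A" for a
  proof -
    have yzc: "zero_vec \<in> cube (Ydim A (Yzero A))" unfolding Yzero_facts(2)[of A] by (rule Yzero_facts(3))
    note rf = rep_facts[of A "Yzero A" zero_vec \<alpha> 0, OF assms(1) Yzero_facts(1) yzc assms(4)]
    have "pval (Yzero A) zero_vec a = 0" using that by (rule Yzero_facts(4))
    then show ?thesis using rf that by simp
  qed
  have P1: "PP A \<alpha> 1 a = 1" if "a \<in> A" for a
  proof -
    have yzc: "zero_vec \<in> cube (Ydim A (Yone A))" unfolding Yone_facts(2)[of A] by (rule Yzero_facts(3))
    note rf = rep_facts[of A "Yone A" zero_vec \<alpha> 1, OF assms(1) Yone_facts(1) yzc assms(5)]
    have "pval (Yone A) zero_vec a = 1" using that by (rule Yone_facts(3))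
    then show ?thesis using rf that by simp
  qed
  have b0: "\<beta> 0 = zero_vec" unfolding \<beta>_def zero_vec_def using P0 nthA by (auto simp: fun_eq_iff)
  have b1: "\<beta> 1 = one_vec n" unfolding \<beta>_def one_vec_def using P1 nthA by (auto simp: fun_eq_iff)
  show ?thesis
    apply (rule exI[of _ c], rule exI[of _ \<beta>])
    using cY cD cont cube mono b0 b1 alpha by blast
qed

end
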